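(* Let $f\in\mathfrak{F}_{sc}$ (with $n=2$) and let $\rho=\frac12(I+\vec n\cdot\vec\sigma)$ be a qubit state with Bloch vector $\vec n=n(\sin\theta\cos\phi,\sin\theta\sin\phi,\cos\theta)$, where $0<n\le1$, $0\le\theta\le\pi/2$, $0\le\phi<2\pi$. Define $\theta_o=\arccos(n\cos\theta)$ and $\theta_3=\arccos\sqrt{1-n^2\sin^2\theta}$, and the following pure state decompositions of $\rho$: (M) $\mathfrak{D}^{(M)}$: $|\chi_{1,2}\rangle=\cos\frac{\theta_o}{2}|0\rangle\pm e^{i\phi}\sin\frac{\theta_o}{2}|1\rangle$ with probabilities $p_{1,2}=\frac12\big(1\pm\frac{n\sin\theta}{\sin\theta_o}\big)$ (taking $p_{1,2}=\frac12$ if $\sin\theta_o=0$); (s) the spectral decomposition $\mathfrak{D}^{(s)}$: $|\psi_1\rangle=\cos\frac{\theta}{2}|0\rangle+e^{i\phi}\sin\frac{\theta}{2}|1\rangle$ with probability $\frac{1+n}{2}$ and $|\psi_2\rangle=\sin\frac{\theta}{2}|0\rangle-e^{i\phi}\cos\frac{\theta}{2}|1\rangle$ with probability $\frac{1-n}{2}$; (m$_1$) $\mathfrak{D}^{(m_1)}$: $|\psi_1\rangle=\cos\frac{\theta_3}{2}|0\rangle+e^{i\phi}\sin\frac{\theta_3}{2}|1\rangle$ and $|\psi_2\rangle=\sin\frac{\theta_3}{2}|0\rangle+e^{i\phi}\cos\frac{\theta_3}{2}|1\rangle$ with probabilities $p_{1,2}=\frac12\big(1\pm\frac{n\cos\theta}{\cos\theta_3}\big)$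 (taking $p_{1,2}=\frac12$ if $\cos\theta_3=0$). Then these are indeed pure state decompositions of $\rho$, and $$\bar C_f(\mathfrak{D}^{(m_1)})\le\bar C_f(\mathfrak{D}^{(s)})\le\bar C_f(\mathfrak{D}^{(M)})=\max_{\mathfrak{D}}\bar C_f(\mathfrak{D}),$$ where the maximum runs over all pure state decompositions of $\rho$. More explicitly, $\bar C_f(\mathfrak{D}^{(M)})=f(\cos^2\frac{\theta_o}{2},\sin^2\frac{\theta_o}{2})$, $\bar C_f(\mathfrak{D}^{(s)})=f(\cos^2\frac{\theta}{2},\sin^2\frac{\theta}{2})$, $\bar C_f(\mathfrak{D}^{(m_1)})=f(\cos^2\frac{\theta_3}{2},\sin^2\frac{\theta_3}{2})$.
   Context: Reference basis $\{|0\rangle,|1\rangle\}$ of $\mathbb{C}^2$; $\vec\sigma=(\sigma_1,\sigma_2,\sigma_3)$ are the Pauli matrices. Let $\Omega$ be the probability simplex in $\mathbb{R}^2$. $\mathfrak{F}_{sc}$ denotes the set of functions $f:\Omega\to\mathbb{R}$ such that (i) $f((1,0))=0$; (ii) $f(x_1,x_2)=f(x_2,x_1)$; (iii) $f$ is concave. For a unit vector $|\psi\rangle=\psi_0|0\rangle+\psi_1|1\rangle$, $C_f(|\psi\rangle)=f(|\psi_0|^2,|\psi_1|^2)$. A pure state decomposition of $\rho$ is a finite family $\{p_k,|\psi_k\rangle\}$ with $p_k\ge0$, $\sum_kp_k=1$, unit vectors $|\psi_k\rangle$ and $\rho=\sum_kp_k|\psi_k\rangle\langle\psi_k|$; its average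 coherence is $\bar C_f(\mathfrak{D})=\sum_kp_kC_f(|\psi_k\rangle)$. *)

theory Defs
  imports "HOL-Analysis.Analysis"
begin

text \<open>Qubit kets live in complex^2; index 1 is the basis vector |0>, index 2 is |1>.
  Operators on C^2 are complex^2^2 (row i, column j = A $ i $ j).\<close>

definition ket :: "complex \<Rightarrow> complex \<Rightarrow> complex^2" where
  "ket a b = vector [a, b]"

definition proj :: "complex^2 \<Rightarrow> complex^2^2" where
  "proj \<psi> = (\<chi> i j. \<psi> $ i * cnj (\<psi> $ j))"

definition sigma1 :: "complex^2^2" where
  "sigma1 = vector [vector [0, 1], vector [1, 0]]"
definition sigma2 :: "complex^2^2" where
  "sigma2 = vector [vector [0, - \<i>], vector [\<i>, 0]]"
definition sigma3 :: "complex^2^2" where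
  "sigma3 = vector [vector [1, 0], vector [0, -1]]"

definition bloch_state :: "real \<Rightarrow> real \<Rightarrow> real \<Rightarrow> complex^2^2" where
  "bloch_state x y z = (1/2) *\<^sub>R (mat 1 + x *\<^sub>R sigma1 + y *\<^sub>R sigma2 + z *\<^sub>R sigma3)"

definition Omega :: "(real \<times> real) set" where
  "Omega = {(x1, x2). 0 \<le> x1 \<and> 0 \<le> x2 \<and> x1 + x2 = 1}"

definition F_sc :: "(real \<times> real \<Rightarrow> real) \<Rightarrow> bool" where
  "F_sc f \<longleftrightarrow> f (1, 0) = 0 \<and> (\<forall>x1 x2. (x1, x2) \<in> Omega \<longrightarrow> f (x1, x2) = f (x2, x1))
      \<and> concave_on Omega f"

definition Cf :: "(real \<times> real \<Rightarrow> real) \<Rightarrow> complex^2 \<Rightarrow> real" where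
  "Cf f \<psi> = f ((cmod (\<psi> $ 1))\<^sup>2, (cmod (\<psi> $ 2))\<^sup>2)"

definition is_pure_dec :: "complex^2^2 \<Rightarrow> (real \<times> (complex^2)) list \<Rightarrow> bool" where
  "is_pure_dec \<rho> D \<longleftrightarrow> (\<forall>(p, \<psi>) \<in> set D. 0 \<le> p \<and> norm \<psi> = 1)
      \<and> sum_list (map fst D) = 1
      \<and> \<rho> = sum_list (map (\<lambda>(p, \<psi>). p *\<^sub>R proj \<psi>) D)"

definition avgC :: "(real \<times> real \<Rightarrow> real) \<Rightarrow> (real \<times> (complex^2)) list \<Rightarrow> real" where
  "avgC f D = sum_list (map (\<lambda>(p, \<psi>). p * Cf f \<psi>) D)"

end

theory Submission imports Defs begin

lemma ket_nth[simp]: "ket a b $ 1 = a" "ket a b $ 2 = b"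
  by (simp_all add: ket_def)

lemma norm_ket: "norm (ket a b) = sqrt ((cmod a)^2 + (cmod b)^2)"
  by (simp add: norm_vec_def L2_set_def sum_2)

lemma norm_sq_vec2: "(norm (\<psi>::complex^2))^2 = (cmod (\<psi>$1))^2 + (cmod (\<psi>$2))^2"
  by (simp add: norm_vec_def L2_set_def sum_2)

lemma proj_nth[simp]: "proj \<psi> $ i $ j = \<psi> $ i * cnj (\<psi> $ j)"
  by (simp add: proj_def)

lemma bloch_nth:
  "bloch_state x y z $ 1 $ 1 = complex_of_real ((1 + z)/2)"
  "bloch_state x y z $ 2 $ 2 = complex_of_real ((1 - z)/2)"
  "bloch_state x y z $ 1 $ 2 = Complex (x/2) (- y/2)"
  "bloch_state x y z $ 2 $ 1 = Complex (x/2) (y/2)"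
  by (simp_all add: bloch_state_def sigma1_def sigma2_def sigma3_def mat_def complex_eq_iff)


lemma dec2:
  fixes p1 p2 a1 b1 a2 b2 r z \<phi> :: real
  assumes "p1 \<ge> 0" "p2 \<ge> 0" "p1 + p2 = 1" "a1^2 + b1^2 = 1" "a2^2 + b2^2 = 1"
    "p1*a1^2 + p2*a2^2 = (1+z)/2" "p1*b1^2 + p2*b2^2 = (1-z)/2" "p1*a1*b1 + p2*a2*b2 = r/2"
  shows "is_pure_dec (bloch_state (r * cos \<phi>) (r * sin \<phi>) z)
     [(p1, ket (complex_of_real a1) (cis \<phi> * complex_of_real b1)),
      (p2, ket (complex_of_real a2) (cis \<phi> * complex_of_real b2))]"
proof -
  have n: "norm (ket (complex_of_real a) (cis \<phi> * complex_of_real b)) = 1" if "a^2+b^2=1" for a b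
    using that by (simp add: norm_ket norm_mult)
  have e4: "complex_of_real p1 * (complex_of_real a1)^2 * 2 + complex_of_real p2 * (complex_of_real a2)^2 * 2 = 1 + complex_of_real z"
  proof -
    have h: "p1*a1^2*2 + p2*a2^2*2 = 1+z" using assms(6) by simp
    have "complex_of_real (p1*a1^2*2 + p2*a2^2*2) = complex_of_real (1+z)" using h by (rule arg_cong)
    then show ?thesis by simp
  qed
  have hr: "r = a1*(b1*(p1*2)) + a2*(b2*(p2*2))" using assms(8) by (simp add: algebra_simps)
  have hz: "z = 1 - (b1*(b1*(p1*2)) + b2*(b2*(p2*2)))" using assms(7) by (simp add: algebra_simps power2_eq_square)
  have cs: "sin \<phi> * sin \<phi> = 1 - cos \<phi> * cos \<phi>" using sin_cos_squared_add[of \<phi>] by (simp add: power2_eq_square)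
  have k2: "b*(b*(p*(cos \<phi>*(cos \<phi>*2)))) + b*(b*(p*(sin \<phi>*(sin \<phi>*2)))) = b*(b*(p*2))" for b p :: real
  proof -
    have "b*(b*(p*(cos \<phi>*(cos \<phi>*2)))) + b*(b*(p*(sin \<phi>*(sin \<phi>*2)))) = b*b*p*2*(cos \<phi> * cos \<phi> + sin \<phi> * sin \<phi>)"
      by algebra
    also have "\<dots> = b*(b*(p*2))" using cs by simp
    finally show ?thesis .
  qed
  have k1: "b*(b*(p*(cos \<phi>*(cos \<phi>*2)))) + (b*(b*(p*(sin \<phi>*(sin \<phi>*2)))) + R) = b*(b*(p*2)) + R" for b p R :: real
    using k2[of b p] by simp
  show ?thesis
    unfolding is_pure_dec_def
    using assms n
    apply (simp add: vec_eq_iff forall_2 bloch_nth)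
    apply (simp add: complex_eq_iff cis.sel power2_eq_square algebra_simps)
    using hr hz apply (simp add: algebra_simps)
    apply (simp only: k1 k2)
    done
qed

lemma avg2:
  "avgC f [(p1, ket (complex_of_real a1) (cis \<phi> * complex_of_real b1)),
      (p2, ket (complex_of_real a2) (cis \<phi> * complex_of_real b2))]
   = p1 * f (a1^2, b1^2) + p2 * f (a2^2, b2^2)"
  by (simp add: avgC_def Cf_def norm_mult)


lemma sl: "sum_list (map g xs) = (\<Sum>i<length xs. g (xs ! i))"
  by (simp add: sum_list_sum_nth atLeast0LessThan)

lemma diag_entry:
  "(sum_list (map (\<lambda>(p, \<psi>). p *\<^sub>R proj \<psi>) D)) $ k $ k
     = complex_of_real (\<Sum>i<length D. fst (D!i) * (cmod (snd (D!i) $ k))^2)"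
proof -
  have t: "(p *\<^sub>R proj \<psi>) $ k $ k = complex_of_real (p * (cmod (\<psi> $ k))^2)" for p \<psi>
  proof -
    have "(p *\<^sub>R proj \<psi>) $ k $ k = p *\<^sub>R (\<psi> $ k * cnj (\<psi> $ k))" by simp
    also have "\<dots> = p *\<^sub>R complex_of_real ((cmod (\<psi> $ k))^2)" by (simp only: complex_norm_square)
    also have "\<dots> = complex_of_real (p * (cmod (\<psi> $ k))^2)" by (simp add: scaleR_conv_of_real)
    finally show ?thesis .
  qed
  show ?thesis unfolding sl by (simp only: sum_component case_prod_beta t of_real_sum)
qed


lemma jensen_bound:
  assumes hc: "concave_on Omega f" and hd: "is_pure_dec (bloch_state x y z) D"
  shows "avgC f D \<le> f ((1+z)/2, (1-z)/2)"
proof -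
  let ?m = "length D"
  define a where "a i = fst (D!i)" for i
  define yv where "yv i = ((cmod (snd (D!i) $ 1))^2, (cmod (snd (D!i) $ 2))^2)" for i
  have mem: "\<And>i. i < ?m \<Longrightarrow> D!i \<in> set D" by simp
  have a0: "\<And>i. i \<in> {..<?m} \<Longrightarrow> a i \<ge> 0"
    using hd mem unfolding is_pure_dec_def a_def by (auto simp: case_prod_beta)
  have nrm: "\<And>i. i < ?m \<Longrightarrow> norm (snd (D!i)) = 1"
    using hd mem unfolding is_pure_dec_def by (auto simp: case_prod_beta)
  have yO: "\<And>i. i \<in> {..<?m} \<Longrightarrow> yv i \<in> Omega"
  proof -
    fix i assume "i \<in> {..<?m}"
    then have "(norm (snd (D!i)))^2 = 1" using nrm by simp
    then show "yv i \<in> Omega" unfolding yv_def Omega_def by (simp add: norm_sq_vec2)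
  qed
  have s1: "(\<Sum>i<?m. a i) = 1"
    using hd unfolding is_pure_dec_def a_def by (simp add: sl)
  then have ne: "{..<?m} \<noteq> {}" by auto
  have rho: "bloch_state x y z = sum_list (map (\<lambda>(p, \<psi>). p *\<^sub>R proj \<psi>) D)"
    using hd unfolding is_pure_dec_def by simp
  have d1: "(\<Sum>i<?m. a i * (cmod (snd (D!i) $ 1))^2) = (1+z)/2"
    using arg_cong[OF rho, of "\<lambda>M. Re (M $ 1 $ 1)"] unfolding diag_entry a_def
    by (simp add: bloch_nth)
  have d2: "(\<Sum>i<?m. a i * (cmod (snd (D!i) $ 2))^2) = (1-z)/2"
    using arg_cong[OF rho, of "\<lambda>M. Re (M $ 2 $ 2)"] unfolding diag_entry a_def
    by (simp add: bloch_nth)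
  have cs: "(\<Sum>i<?m. a i *\<^sub>R yv i) = ((1+z)/2, (1-z)/2)"
    using d1 d2 by (simp add: prod_eq_iff fst_sum snd_sum yv_def)
  have "(\<Sum>i<?m. a i * f (yv i)) \<le> f (\<Sum>i<?m. a i *\<^sub>R yv i)"
    by (rule concave_on_sum[OF _ ne hc s1 a0 yO]) simp_all
  moreover have "avgC f D = (\<Sum>i<?m. a i * f (yv i))"
    unfolding avgC_def sl a_def yv_def Cf_def by (simp add: case_prod_beta)
  ultimately show ?thesis using cs by simp
qed


lemma half:
  fixes t :: real
  shows "(cos (t/2))^2 = (1 + cos t)/2" "(sin (t/2))^2 = (1 - cos t)/2"
    "cos (t/2) * sin (t/2) = sin t / 2"
proof -
  have "cos t = cos (2*(t/2))" by simp
  also have "\<dots> = 2 * (cos (t/2))^2 - 1" by (rule cos_double_cos)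
  finally have h: "cos t = 2 * (cos (t/2))^2 - 1" .
  then show "(cos (t/2))^2 = (1 + cos t)/2" by simp
  show "(sin (t/2))^2 = (1 - cos t)/2" using h sin_squared_eq[of "t/2"] by simp
  have "sin t = sin (2*(t/2))" by simp
  also have "\<dots> = 2 * sin (t/2) * cos (t/2)" by (rule sin_double)
  finally show "cos (t/2) * sin (t/2) = sin t / 2" by simp
qed

lemma mono_g:
  assumes hf: "F_sc f" and "0 \<le> t" "t \<le> u" "u \<le> 1"
  shows "f ((1+u)/2, (1-u)/2) \<le> f ((1+t)/2, (1-t)/2)"
proof (cases "u = 0")
  case True then show ?thesis using assms by simp
next
  case False
  then have u0: "u > 0" using assms by simp
  define s where "s = (u - t)/(2*u)"
  have s0: "0 \<le> s" "s \<le> 1" using u0 assms unfolding s_def by (auto simp: field_simps)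
  have hc: "concave_on Omega f" and hs: "\<And>x1 x2. (x1, x2) \<in> Omega \<Longrightarrow> f (x1, x2) = f (x2, x1)"
    using hf unfolding F_sc_def by auto
  have X: "((1+u)/2, (1-u)/2) \<in> Omega" and Y: "((1-u)/2, (1+u)/2) \<in> Omega"
    using assms unfolding Omega_def by (auto simp: field_simps)
  have comb: "(1 - s) *\<^sub>R ((1+u)/2, (1-u)/2) + s *\<^sub>R ((1-u)/2, (1+u)/2) = ((1+t)/2, (1-t)/2)"
    using u0 unfolding s_def by (simp add: prod_eq_iff field_simps)
  have "(1 - s) * f ((1+u)/2, (1-u)/2) + s * f ((1-u)/2, (1+u)/2) \<le> f ((1+t)/2, (1-t)/2)"
    using concave_onD[OF hc s0 X Y, unfolded comb] by simp
  moreover have "f ((1-u)/2, (1+u)/2) = f ((1+u)/2, (1-u)/2)" using hs[OF X] by simp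
  ultimately have "(1 - s) * f ((1+u)/2, (1-u)/2) + s * f ((1+u)/2, (1-u)/2) \<le> f ((1+t)/2, (1-t)/2)" by simp
  moreover have "(1 - s) * f ((1+u)/2, (1-u)/2) + s * f ((1+u)/2, (1-u)/2) = f ((1+u)/2, (1-u)/2)"
    by (simp add: algebra_simps)
  ultimately show ?thesis by linarith
qed


lemma neg_cis: "- cis \<phi> * complex_of_real s = cis \<phi> * complex_of_real (- s)"
  by simp

lemma avg_same: "(1 + q) / 2 * X + (1 - q) / 2 * X = (X::real)"
  by (simp add: field_simps)

theorem mainTheorem5:
  fixes f :: "real \<times> real \<Rightarrow> real" and n \<theta> \<phi> :: real
  assumes hf: "F_sc f"
    and hn: "0 < n" "n \<le> 1"
    and h\<theta>: "0 \<le> \<theta>" "\<theta> \<le> pi / 2"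
    and h\<phi>: "0 \<le> \<phi>" "\<phi> < 2 * pi"
  defines "\<rho> \<equiv> bloch_state (n * sin \<theta> * cos \<phi>) (n * sin \<theta> * sin \<phi>) (n * cos \<theta>)"
    and "\<theta>o \<equiv> arccos (n * cos \<theta>)"
    and "\<theta>3 \<equiv> arccos (sqrt (1 - n\<^sup>2 * (sin \<theta>)\<^sup>2))"
  defines "DM \<equiv>
      (let q = (if sin \<theta>o = 0 then 0 else n * sin \<theta> / sin \<theta>o) in
       [((1 + q) / 2, ket (complex_of_real (cos (\<theta>o / 2))) (cis \<phi> * complex_of_real (sin (\<theta>o / 2)))),
        ((1 - q) / 2, ket (complex_of_real (cos (\<theta>o / 2))) (- cis \<phi> * complex_of_real (sin (\<theta>o / 2))))])"
    and "Ds \<equiv>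
       [((1 + n) / 2, ket (complex_of_real (cos (\<theta> / 2))) (cis \<phi> * complex_of_real (sin (\<theta> / 2)))),
        ((1 - n) / 2, ket (complex_of_real (sin (\<theta> / 2))) (- cis \<phi> * complex_of_real (cos (\<theta> / 2))))]"
    and "Dm1 \<equiv>
      (let q = (if cos \<theta>3 = 0 then 0 else n * cos \<theta> / cos \<theta>3) in
       [((1 + q) / 2, ket (complex_of_real (cos (\<theta>3 / 2))) (cis \<phi> * complex_of_real (sin (\<theta>3 / 2)))),
        ((1 - q) / 2, ket (complex_of_real (sin (\<theta>3 / 2))) (cis \<phi> * complex_of_real (cos (\<theta>3 / 2))))])"
  shows "is_pure_dec \<rho> DM \<and> is_pure_dec \<rho> Ds \<and> is_pure_dec \<rho> Dm1
    \<and> avgC f Dm1 \<le> avgC f Ds \<and> avgC f Ds \<le> avgC f DM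
    \<and> (\<forall>D. is_pure_dec \<rho> D \<longrightarrow> avgC f D \<le> avgC f DM)
    \<and> avgC f DM = f ((cos (\<theta>o / 2))\<^sup>2, (sin (\<theta>o / 2))\<^sup>2)
    \<and> avgC f Ds = f ((cos (\<theta> / 2))\<^sup>2, (sin (\<theta> / 2))\<^sup>2)
    \<and> avgC f Dm1 = f ((cos (\<theta>3 / 2))\<^sup>2, (sin (\<theta>3 / 2))\<^sup>2)"
proof -
  have hc: "concave_on Omega f" and hs: "\<And>x1 x2. (x1, x2) \<in> Omega \<Longrightarrow> f (x1, x2) = f (x2, x1)"
    using hf unfolding F_sc_def by auto
  define C where "C = n * cos \<theta>"
  define r where "r = n * sin \<theta>"
  define S where "S = sqrt (1 - n\<^sup>2 * (sin \<theta>)\<^sup>2)"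
  have cpos: "cos \<theta> \<ge> 0" using h\<theta> by (intro cos_ge_zero) auto
  have spos: "sin \<theta> \<ge> 0" using h\<theta> by (intro sin_ge_zero) auto
  have cle: "cos \<theta> \<le> 1" by simp
  have sc: "(sin \<theta>)^2 + (cos \<theta>)^2 = 1" by simp
  have C0: "0 \<le> C" unfolding C_def using hn cpos by simp
  have C1: "C \<le> 1" unfolding C_def using hn cpos cle by (intro mult_le_one) auto
  have r0: "0 \<le> r" unfolding r_def using hn spos by simp
  have "r^2 + C^2 = n^2 * ((sin \<theta>)^2 + (cos \<theta>)^2)" unfolding r_def C_def power_mult_distrib by (simp only: distrib_left)
  then have rC: "r^2 + C^2 = n^2" unfolding sc by simp
  have n2: "n^2 \<le> 1" using hn by (intro power_le_one) auto
  have \<rho>eq: "\<rho> = bloch_state (r * cos \<phi>) (r * sin \<phi>) C"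
    unfolding \<rho>_def r_def C_def by simp
  have cO: "cos \<theta>o = C" unfolding \<theta>o_def C_def[symmetric] using C0 C1 by (simp add: cos_arccos)
  have sO: "sin \<theta>o = sqrt (1 - C^2)" unfolding \<theta>o_def C_def[symmetric] using C0 C1 by (simp add: sin_arccos)
  have rsO: "r \<le> sin \<theta>o"
  proof -
    have "r^2 \<le> 1 - C^2" using rC n2 by linarith
    then have "sqrt (r^2) \<le> sqrt (1 - C^2)" by (rule real_sqrt_le_mono)
    then show ?thesis using r0 sO by simp
  qed
  have sqC: "0 \<le> C^2" "0 \<le> r^2" by simp_all
  have S01: "0 \<le> 1 - r^2" "1 - r^2 \<le> 1" using rC n2 sqC by linarith+
  have Sr: "S = sqrt (1 - r^2)" unfolding S_def r_def by (simp add: power_mult_distrib)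
  have S0: "0 \<le> S" "S \<le> 1" using S01 Sr by auto
  have c3: "cos \<theta>3 = S" unfolding \<theta>3_def S_def[symmetric] using S0 by (simp add: cos_arccos)
  have s3a: "sin \<theta>3 = sqrt (1 - S^2)" unfolding \<theta>3_def S_def[symmetric] using S0 by (simp add: sin_arccos)
  have s3b: "S^2 = 1 - r^2" using Sr S01 by simp
  have s3: "sin \<theta>3 = r" using s3a s3b r0 by simp
  have CS: "C \<le> S"
  proof -
    have "C^2 \<le> 1 - r^2" using rC n2 by linarith
    then have "sqrt (C^2) \<le> sqrt (1 - r^2)" by (rule real_sqrt_le_mono)
    then show ?thesis using C0 Sr by simp
  qed
  have cS: "cos \<theta> \<le> S"
  proof -
    have "r^2 = n^2 * (sin \<theta>)^2" unfolding r_def by (simp add: power_mult_distrib)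
    then have "r^2 \<le> (sin \<theta>)^2" using mult_left_le_one_le[of "(sin \<theta>)^2" "n^2"] n2 by simp
    then have "(cos \<theta>)^2 \<le> 1 - r^2" using sc by linarith
    then have "sqrt ((cos \<theta>)^2) \<le> sqrt (1 - r^2)" by (rule real_sqrt_le_mono)
    then show ?thesis using cpos Sr by simp
  qed
  have Cc: "C \<le> cos \<theta>" unfolding C_def using hn cpos by (simp add: mult_left_le_one_le)
  define qM where "qM = (if sin \<theta>o = 0 then 0 else n * sin \<theta> / sin \<theta>o)"
  define q3 where "q3 = (if cos \<theta>3 = 0 then 0 else n * cos \<theta> / cos \<theta>3)"
  have sOpos: "0 \<le> sin \<theta>o" using sO C0 C1 by (simp add: power_le_one)
  have qM: "0 \<le> qM \<and> qM \<le> 1 \<and> qM * sin \<theta>o = r"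
  proof (cases "sin \<theta>o = 0")
    case True
    have r00: "r = 0" using rsO r0 True by linarith
    have "qM = 0" unfolding qM_def using True by simp
    then show ?thesis using r00 by simp
  next
    case False
    then have p: "0 < sin \<theta>o" using sOpos by linarith
    have qq: "qM = r / sin \<theta>o" unfolding qM_def r_def using False by simp
    have a1: "0 \<le> r / sin \<theta>o" using r0 p by simp
    have a2: "r / sin \<theta>o \<le> 1" using rsO p by simp
    have a3: "r / sin \<theta>o * sin \<theta>o = r" using p by simp
    show ?thesis unfolding qq using a1 a2 a3 by blast
  qed
  have q3: "0 \<le> q3 \<and> q3 \<le> 1 \<and> q3 * S = C"
  proof (cases "S = 0")
    case True
    have C00: "C = 0" using CS C0 True by linarith
    have "q3 = 0" unfolding q3_def c3 using True by simp
    then show ?thesis using C00 True by simp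
  next
    case False
    then have p: "0 < S" using S0 by linarith
    have qq: "q3 = C / S" unfolding q3_def c3 C_def using False by simp
    have a1: "0 \<le> C / S" using C0 p by simp
    have a2: "C / S \<le> 1" using CS p by simp
    have a3: "C / S * S = C" using p by simp
    show ?thesis unfolding qq using a1 a2 a3 by blast
  qed
  have DM': "DM = [((1 + qM) / 2, ket (complex_of_real (cos (\<theta>o / 2))) (cis \<phi> * complex_of_real (sin (\<theta>o / 2)))),
        ((1 - qM) / 2, ket (complex_of_real (cos (\<theta>o / 2))) (cis \<phi> * complex_of_real (- sin (\<theta>o / 2))))]"
    unfolding DM_def qM_def Let_def neg_cis ..
  have Ds': "Ds = [((1 + n) / 2, ket (complex_of_real (cos (\<theta> / 2))) (cis \<phi> * complex_of_real (sin (\<theta> / 2)))),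
        ((1 - n) / 2, ket (complex_of_real (sin (\<theta> / 2))) (cis \<phi> * complex_of_real (- cos (\<theta> / 2))))]"
    unfolding Ds_def neg_cis ..
  have Dm1': "Dm1 = [((1 + q3) / 2, ket (complex_of_real (cos (\<theta>3 / 2))) (cis \<phi> * complex_of_real (sin (\<theta>3 / 2)))),
        ((1 - q3) / 2, ket (complex_of_real (sin (\<theta>3 / 2))) (cis \<phi> * complex_of_real (cos (\<theta>3 / 2))))]"
    unfolding Dm1_def q3_def Let_def ..
  note hO = half[of \<theta>o] and hT = half[of \<theta>] and h3 = half[of \<theta>3]
  have decM: "is_pure_dec \<rho> DM"
    unfolding DM' \<rho>eq
  proof (rule dec2)
    show "0 \<le> (1 + qM)/2" "0 \<le> (1 - qM)/2" using qM by simp_all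
    show "(1 + qM)/2 + (1 - qM)/2 = 1" by (simp add: field_simps)
    show "(cos (\<theta>o/2))^2 + (sin (\<theta>o/2))^2 = 1" "(cos (\<theta>o/2))^2 + (- sin (\<theta>o/2))^2 = 1" by simp_all
    have e: "(1 + qM)/2 * X + (1 - qM)/2 * X = X" for X :: real by (simp add: field_simps)
    show "(1 + qM)/2 * (cos (\<theta>o/2))^2 + (1 - qM)/2 * (cos (\<theta>o/2))^2 = (1 + C)/2"
      using e hO cO by simp
    show "(1 + qM)/2 * (sin (\<theta>o/2))^2 + (1 - qM)/2 * (- sin (\<theta>o/2))^2 = (1 - C)/2"
      using e hO cO by simp
    have e2: "(1 + qM)/2 * X + (1 - qM)/2 * (- X) = qM * X" for X :: real by (simp add: field_simps)
    have "(1 + qM)/2 * cos (\<theta>o/2) * sin (\<theta>o/2) + (1 - qM)/2 * cos (\<theta>o/2) * (- sin (\<theta>o/2)) = qM * (cos (\<theta>o/2) * sin (\<theta>o/2))"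
      using e2[of "cos (\<theta>o/2) * sin (\<theta>o/2)"] by (simp add: mult.assoc)
    also have "\<dots> = qM * sin \<theta>o / 2" using hO(3) by simp
    also have "\<dots> = r/2" using qM by simp
    finally show "(1 + qM)/2 * cos (\<theta>o/2) * sin (\<theta>o/2) + (1 - qM)/2 * cos (\<theta>o/2) * (- sin (\<theta>o/2)) = r/2" .
  qed
  have decS: "is_pure_dec \<rho> Ds"
    unfolding Ds' \<rho>eq
  proof (rule dec2)
    show "0 \<le> (1 + n)/2" "0 \<le> (1 - n)/2" using hn by simp_all
    show "(1 + n)/2 + (1 - n)/2 = 1" by (simp add: field_simps)
    show "(cos (\<theta>/2))^2 + (sin (\<theta>/2))^2 = 1" "(sin (\<theta>/2))^2 + (- cos (\<theta>/2))^2 = 1" by simp_all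
    have "(1 + n)/2 * (cos (\<theta>/2))^2 + (1 - n)/2 * (sin (\<theta>/2))^2 = (1 + n)/2 * ((1 + cos \<theta>)/2) + (1 - n)/2 * ((1 - cos \<theta>)/2)"
      unfolding hT ..
    also have "\<dots> = (1 + C)/2" unfolding C_def by (simp add: field_simps)
    finally show "(1 + n)/2 * (cos (\<theta>/2))^2 + (1 - n)/2 * (sin (\<theta>/2))^2 = (1 + C)/2" .
    have "(1 + n)/2 * (sin (\<theta>/2))^2 + (1 - n)/2 * (- cos (\<theta>/2))^2 = (1 + n)/2 * ((1 - cos \<theta>)/2) + (1 - n)/2 * ((1 + cos \<theta>)/2)"
      unfolding power2_minus hT ..
    also have "\<dots> = (1 - C)/2" unfolding C_def by (simp add: field_simps)
    finally show "(1 + n)/2 * (sin (\<theta>/2))^2 + (1 - n)/2 * (- cos (\<theta>/2))^2 = (1 - C)/2" .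
    have "(1 + n)/2 * cos (\<theta>/2) * sin (\<theta>/2) + (1 - n)/2 * sin (\<theta>/2) * (- cos (\<theta>/2)) = n * (cos (\<theta>/2) * sin (\<theta>/2))"
      by (simp add: field_simps)
    also have "\<dots> = r/2" unfolding hT(3) r_def by simp
    finally show "(1 + n)/2 * cos (\<theta>/2) * sin (\<theta>/2) + (1 - n)/2 * sin (\<theta>/2) * (- cos (\<theta>/2)) = r/2" .
  qed
  have q3S: "q3 * S = C" using q3 by simp
  have decm: "is_pure_dec \<rho> Dm1"
    unfolding Dm1' \<rho>eq
  proof (rule dec2)
    show "0 \<le> (1 + q3)/2" "0 \<le> (1 - q3)/2" using q3 by simp_all
    show "(1 + q3)/2 + (1 - q3)/2 = 1" by (simp add: field_simps)
    show "(cos (\<theta>3/2))^2 + (sin (\<theta>3/2))^2 = 1" "(sin (\<theta>3/2))^2 + (cos (\<theta>3/2))^2 = 1" by simp_all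
    have "(1 + q3)/2 * (cos (\<theta>3/2))^2 + (1 - q3)/2 * (sin (\<theta>3/2))^2 = (1 + q3)/2 * ((1 + S)/2) + (1 - q3)/2 * ((1 - S)/2)"
      unfolding h3 c3 ..
    also have "\<dots> = (1 + q3 * S)/2" by (simp add: field_simps)
    finally show "(1 + q3)/2 * (cos (\<theta>3/2))^2 + (1 - q3)/2 * (sin (\<theta>3/2))^2 = (1 + C)/2" unfolding q3S .
    have "(1 + q3)/2 * (sin (\<theta>3/2))^2 + (1 - q3)/2 * (cos (\<theta>3/2))^2 = (1 + q3)/2 * ((1 - S)/2) + (1 - q3)/2 * ((1 + S)/2)"
      unfolding h3 c3 ..
    also have "\<dots> = (1 - q3 * S)/2" by (simp add: field_simps)
    finally show "(1 + q3)/2 * (sin (\<theta>3/2))^2 + (1 - q3)/2 * (cos (\<theta>3/2))^2 = (1 - C)/2" unfolding q3S .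
    have "(1 + q3)/2 * cos (\<theta>3/2) * sin (\<theta>3/2) + (1 - q3)/2 * sin (\<theta>3/2) * cos (\<theta>3/2) = cos (\<theta>3/2) * sin (\<theta>3/2)"
      by (simp add: field_simps)
    also have "\<dots> = r/2" unfolding h3(3) s3 ..
    finally show "(1 + q3)/2 * cos (\<theta>3/2) * sin (\<theta>3/2) + (1 - q3)/2 * sin (\<theta>3/2) * cos (\<theta>3/2) = r/2" .
  qed
  have inO: "\<And>t. ((cos (t/2))^2, (sin (t/2))^2) \<in> Omega" unfolding Omega_def by simp
  have sw: "\<And>t. f ((sin (t/2))^2, (cos (t/2))^2) = f ((cos (t/2))^2, (sin (t/2))^2)"
    using hs[OF inO] by simp
  have vM: "avgC f DM = f ((cos (\<theta>o / 2))\<^sup>2, (sin (\<theta>o / 2))\<^sup>2)"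
    unfolding DM' avg2 power2_minus by (rule avg_same)
  have vS: "avgC f Ds = f ((cos (\<theta> / 2))\<^sup>2, (sin (\<theta> / 2))\<^sup>2)"
    unfolding Ds' avg2 power2_minus sw by (rule avg_same)
  have vm: "avgC f Dm1 = f ((cos (\<theta>3 / 2))\<^sup>2, (sin (\<theta>3 / 2))\<^sup>2)"
    unfolding Dm1' avg2 sw by (rule avg_same)
  have gM: "avgC f DM = f ((1 + C)/2, (1 - C)/2)" using vM hO cO by simp
  have gS: "avgC f Ds = f ((1 + cos \<theta>)/2, (1 - cos \<theta>)/2)" using vS hT by simp
  have gm: "avgC f Dm1 = f ((1 + S)/2, (1 - S)/2)" using vm h3 c3 by simp
  have i1: "avgC f Dm1 \<le> avgC f Ds" unfolding gm gS
    by (rule mono_g[OF hf]) (use cpos cS S0 in auto)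
  have i2: "avgC f Ds \<le> avgC f DM" unfolding gM gS
    by (rule mono_g[OF hf]) (use C0 Cc in auto)
  have mx: "\<forall>D. is_pure_dec \<rho> D \<longrightarrow> avgC f D \<le> avgC f DM"
    unfolding gM \<rho>eq using jensen_bound[OF hc] by blast
  show ?thesis by (intro conjI decM decS decm i1 i2 mx vM vS vm)
qed

end
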